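(* Let $x\in H$ with $\langle x,R_0x\rangle>0$. Then the random variables $A_k(\omega)=\langle x,\Delta_k(\omega)x\rangle$, $k\ge1$, are nonnegative and $\nu_x$-integrable, and $\langle x,R_0x\rangle=\mathbb E_{\nu_x}[\langle x,R_\infty(\omega)x\rangle]+\sum_{k=1}^\infty\mathbb E_{\nu_x}[A_k]$. In particular $\sum_{k=1}^\infty\mathbb E_{\nu_x}[A_k]=\langle x,R_0x\rangle-\mathbb E_{\nu_x}[\langle x,R_\infty(\omega)x\rangle]<\infty$.
   Context: Let $H$ be a complex Hilbert space, $m\ge2$, $P_1,\dots,P_m$ orthogonal projections on $H$, $R_0\in B(H)_+$. Let $\mathcal A=\{1,\dots,m\}$, $\mathcal W$ the set of finite words over $\mathcal A$ (including the empty word $\emptyset$); for nonempty $w=j_1\cdots j_n$, $w^-=j_1\cdots j_{n-1}$, and $wj$ is concatenation. WR energy tree: $R_\emptyset=R_0$, and for $w=j_1\cdots j_n$, $n\ge1$, $R_w=R_{w^-}^{1/2}(I-P_{j_n})R_{w^-}^{1/2}$, $D_w=R_{w^-}^{1/2}P_{j_n}R_{w^-}^{1/2}$. $\Omega=\mathcal A^{\mathbb N}$; for $\omega=(j_1,j_2,\dots)$, $\omega|_n=j_1\cdots j_n$, $\omega|_0=\emptyset$; cylinders $[w]=\{\omega:\omega|_{|w|}=w\}$. $R_\infty(\omega)$ is the strong limit of the Loewner-decreasing sequence $R_{\omega|_n}$. The step-$k$ dissipated operator along $\omega$ is $\Delta_k(\omega)=D_{\omega|_k}=R_{\omega|_{k-1}}^{1/2}P_{j_k}R_{\omega|_{k-1}}^{1/2}$.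 Energy-biased path measure: with $x$ fixed, $a_{wj}=\langle x,D_{wj}x\rangle$, a fixed probability vector $q$ on $\mathcal A$, $p_x(j\mid w)=a_{wj}/\sum_k a_{wk}$ if $\sum_ka_{wk}>0$ and $p_x(j\mid w)=q_j$ otherwise; $\nu_x$ is the unique Borel probability measure on $\Omega$ with $\nu_x([j_1\cdots j_n])=\prod_{i=1}^n p_x(j_i\mid j_1\cdots j_{i-1})$. *)

theory Defs
  imports "HOL-Analysis.Analysis" "HOL-Probability.Probability" "HOL-Library.Complex_Order"
begin

text \<open>The distribution has no complex vector space hierarchy, so we introduce one:
  a real normed vector space with a complex scalar multiplication compatible with the
  real one, and a complex inner product (linear in the second argument, conjugate linear
  in the first) inducing the norm.\<close>

class complex_inner = real_normed_vector +
  fixes scaleC :: "complex \<Rightarrow> 'a \<Rightarrow> 'a"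
    and cinner :: "'a \<Rightarrow> 'a \<Rightarrow> complex"
  assumes scaleC_add_right: "scaleC a (x + y) = scaleC a x + scaleC a y"
    and scaleC_add_left: "scaleC (a + b) x = scaleC a x + scaleC b x"
    and scaleC_scaleC: "scaleC a (scaleC b x) = scaleC (a * b) x"
    and scaleC_one: "scaleC 1 x = x"
    and scaleR_scaleC: "scaleR r x = scaleC (complex_of_real r) x"
    and cinner_cnj: "cinner x y = cnj (cinner y x)"
    and cinner_add_right: "cinner x (y + z) = cinner x y + cinner x z"
    and cinner_scaleC_right: "cinner x (scaleC a y) = a * cinner x y"
    and cinner_ge_zero: "0 \<le> cinner x x"
    and cinner_eq_zero_iff: "cinner x x = 0 \<longleftrightarrow> x = 0"
    and norm_eq_sqrt_cinner: "norm x = sqrt (Re (cinner x x))"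

class chilbert_space = complex_inner + complete_space

definition bounded_op :: "('a::complex_inner \<Rightarrow> 'a) \<Rightarrow> bool" where
  "bounded_op T \<longleftrightarrow> bounded_linear T \<and> (\<forall>c x. T (scaleC c x) = scaleC c (T x))"

definition positive_op :: "('a::complex_inner \<Rightarrow> 'a) \<Rightarrow> bool" where
  "positive_op T \<longleftrightarrow> bounded_op T \<and> (\<forall>x. 0 \<le> cinner x (T x))"

definition orth_proj :: "('a::complex_inner \<Rightarrow> 'a) \<Rightarrow> bool" where
  "orth_proj P \<longleftrightarrow> bounded_op P \<and> P \<circ> P = P \<and> (\<forall>x y. cinner (P x) y = cinner x (P y))"

text \<open>The (unique) positive square root of a positive operator.\<close>
definition op_sqrt :: "('a::complex_inner \<Rightarrow> 'a) \<Rightarrow> ('a \<Rightarrow> 'a)" where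
  "op_sqrt R = (THE S. positive_op S \<and> S \<circ> S = R)"

text \<open>Words over \<open>{1..m}\<close> are lists of naturals; projections are indexed \<open>P j\<close>.
  \<open>R_rev\<close> works on reversed words so that the last letter is the head.\<close>
fun R_rev :: "(nat \<Rightarrow> 'a::complex_inner \<Rightarrow> 'a) \<Rightarrow> ('a \<Rightarrow> 'a) \<Rightarrow> nat list \<Rightarrow> ('a \<Rightarrow> 'a)" where
  "R_rev P R0 [] = R0"
| "R_rev P R0 (j # v) = op_sqrt (R_rev P R0 v) \<circ> (\<lambda>y. y - P j y) \<circ> op_sqrt (R_rev P R0 v)"

definition R_word :: "(nat \<Rightarrow> 'a::complex_inner \<Rightarrow> 'a) \<Rightarrow> ('a \<Rightarrow> 'a) \<Rightarrow> nat list \<Rightarrow> ('a \<Rightarrow> 'a)" where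
  "R_word P R0 w = R_rev P R0 (rev w)"

definition D_word :: "(nat \<Rightarrow> 'a::complex_inner \<Rightarrow> 'a) \<Rightarrow> ('a \<Rightarrow> 'a) \<Rightarrow> nat list \<Rightarrow> ('a \<Rightarrow> 'a)" where
  "D_word P R0 w = op_sqrt (R_word P R0 (butlast w)) \<circ> P (last w) \<circ> op_sqrt (R_word P R0 (butlast w))"

text \<open>A path \<open>\<omega> = (j_1, j_2, \<dots>)\<close> is a function \<open>nat \<Rightarrow> nat\<close> with \<open>\<omega> i = j_{i+1}\<close>.\<close>
definition prefix :: "(nat \<Rightarrow> nat) \<Rightarrow> nat \<Rightarrow> nat list" where
  "prefix \<omega> n = map \<omega> [0..<n]"

text \<open>Path space \<open>\<Omega> = A^\<nat>\<close> with its product (= Borel) sigma algebra.\<close>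
definition path_space :: "nat \<Rightarrow> (nat \<Rightarrow> nat) measure" where
  "path_space m = PiM UNIV (\<lambda>_. count_space {1..m})"

definition cylinder :: "nat \<Rightarrow> nat list \<Rightarrow> (nat \<Rightarrow> nat) set" where
  "cylinder m w = {\<omega> \<in> space (path_space m). prefix \<omega> (length w) = w}"

definition R_inf :: "(nat \<Rightarrow> 'a::complex_inner \<Rightarrow> 'a) \<Rightarrow> ('a \<Rightarrow> 'a) \<Rightarrow> (nat \<Rightarrow> nat) \<Rightarrow> ('a \<Rightarrow> 'a)" where
  "R_inf P R0 \<omega> = (\<lambda>y. lim (\<lambda>n. R_word P R0 (prefix \<omega> n) y))"

definition Delta :: "(nat \<Rightarrow> 'a::complex_inner \<Rightarrow> 'a) \<Rightarrow> ('a \<Rightarrow> 'a) \<Rightarrow> nat \<Rightarrow> (nat \<Rightarrow> nat) \<Rightarrow> ('a \<Rightarrow> 'a)" where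
  "Delta P R0 k \<omega> = D_word P R0 (prefix \<omega> k)"

text \<open>\<open>a_{wj} = \<langle>x, D_{wj} x\<rangle>\<close> (a nonnegative real, as \<open>D_{wj}\<close> is positive; we take its real part).\<close>
definition energy_a :: "(nat \<Rightarrow> 'a::complex_inner \<Rightarrow> 'a) \<Rightarrow> ('a \<Rightarrow> 'a) \<Rightarrow> 'a \<Rightarrow> nat list \<Rightarrow> nat \<Rightarrow> real" where
  "energy_a P R0 x w j = Re (cinner x (D_word P R0 (w @ [j]) x))"

definition p_cond :: "nat \<Rightarrow> (nat \<Rightarrow> 'a::complex_inner \<Rightarrow> 'a) \<Rightarrow> ('a \<Rightarrow> 'a) \<Rightarrow> (nat \<Rightarrow> real) \<Rightarrow> 'a
    \<Rightarrow> nat list \<Rightarrow> nat \<Rightarrow> real" where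
  "p_cond m P R0 q x w j =
     (let s = (\<Sum>k\<in>{1..m}. energy_a P R0 x w k)
      in if s > 0 then energy_a P R0 x w j / s else q j)"

text \<open>\<open>\<nu>\<close> is the energy-biased path measure \<open>\<nu>_x\<close>: a probability measure on \<open>\<Omega>\<close> with the
  prescribed cylinder probabilities (such a measure is unique).\<close>
definition is_path_measure :: "nat \<Rightarrow> (nat \<Rightarrow> 'a::complex_inner \<Rightarrow> 'a) \<Rightarrow> ('a \<Rightarrow> 'a) \<Rightarrow> (nat \<Rightarrow> real)
    \<Rightarrow> 'a \<Rightarrow> (nat \<Rightarrow> nat) measure \<Rightarrow> bool" where
  "is_path_measure m P R0 q x \<nu> \<longleftrightarrow>
     prob_space \<nu> \<and> sets \<nu> = sets (path_space m) \<and>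
     (\<forall>w. set w \<subseteq> {1..m} \<longrightarrow>
        measure \<nu> (cylinder m w) = (\<Prod>i<length w. p_cond m P R0 q x (take i w) (w ! i)))"

end

theory Submission
  imports Defs
begin

lemma cinner_add_left: "cinner (x + y) z = cinner x z + cinner (y::'a::complex_inner) z"
  by (metis cinner_cnj cinner_add_right complex_cnj_add)

lemma cinner_scaleC_left: "cinner (scaleC a x) (y::'a::complex_inner) = cnj a * cinner x y"
  by (metis cinner_cnj cinner_scaleC_right complex_cnj_mult complex_cnj_cnj)

lemma cinner_zero_right [simp]: "cinner x (0::'a::complex_inner) = 0"
  using cinner_add_right[of x 0 0] by simp

lemma cinner_zero_left [simp]: "cinner (0::'a::complex_inner) x = 0"
  by (metis cinner_cnj cinner_zero_right complex_cnj_zero)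

lemma cinner_minus_right: "cinner x (- y) = - cinner x (y::'a::complex_inner)"
proof -
  have "cinner x y + cinner x (-y) = 0" using cinner_add_right[of x y "-y"] by simp
  then have "cinner x (-y) + cinner x y = 0" by (simp only: add.commute)
  then show ?thesis by (simp only: eq_neg_iff_add_eq_0)
qed

lemma cinner_minus_left: "cinner (- x) y = - cinner x (y::'a::complex_inner)"
proof -
  have "cinner x y + cinner (-x) y = 0" using cinner_add_left[of x "-x" y] by simp
  then have "cinner (-x) y + cinner x y = 0" by (simp only: add.commute)
  then show ?thesis by (simp only: eq_neg_iff_add_eq_0)
qed

lemma cinner_diff_right: "cinner x (y - z) = cinner x y - cinner x (z::'a::complex_inner)"
  by (simp only: diff_conv_add_uminus cinner_add_right cinner_minus_right)

lemma cinner_diff_left: "cinner (x - y) z = cinner x z - cinner y (z::'a::complex_inner)"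
  by (simp only: diff_conv_add_uminus cinner_add_left cinner_minus_left)

lemma cinner_scaleR_right: "cinner x (scaleR r y) = of_real r * cinner x (y::'a::complex_inner)"
  by (simp add: scaleR_scaleC cinner_scaleC_right)

lemma cinner_scaleR_left: "cinner (scaleR r x) y = of_real r * cinner x (y::'a::complex_inner)"
  by (simp add: scaleR_scaleC cinner_scaleC_left)

lemma cinner_sum_right: "cinner x (sum f A) = (\<Sum>a\<in>A. cinner (x::'a::complex_inner) (f a))"
  by (induction A rule: infinite_finite_induct) (simp_all add: cinner_add_right)

lemma cinner_self_norm: "cinner x x = complex_of_real ((norm (x::'a::complex_inner))^2)"
proof -
  have "0 \<le> cinner x x" by (rule cinner_ge_zero)
  then have i: "Im (cinner x x) = 0" and r: "0 \<le> Re (cinner x x)"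
    by (auto simp: less_eq_complex_def)
  have "(norm x)^2 = Re (cinner x x)" using r by (simp add: norm_eq_sqrt_cinner)
  then show ?thesis using i by (simp add: complex_eq_iff)
qed

lemma Re_cinner_self: "Re (cinner x x) = (norm (x::'a::complex_inner))^2"
  by (simp add: cinner_self_norm)

lemma scaleC_zero_right [simp]: "scaleC a (0::'a::complex_inner) = 0"
  using scaleC_add_right[of a "0::'a" 0] by simp

lemma scaleC_zero_left [simp]: "scaleC 0 (x::'a::complex_inner) = 0"
  by (metis scaleR_scaleC scaleR_zero_left of_real_0)

lemma scaleC_minus_right: "scaleC a (- x) = - scaleC a (x::'a::complex_inner)"
proof -
  have "scaleC a x + scaleC a (-x) = 0" using scaleC_add_right[of a x "-x"] by simp
  then have "scaleC a (-x) + scaleC a x = 0" by (simp only: add.commute)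
  then show ?thesis by (simp only: eq_neg_iff_add_eq_0)
qed

lemma scaleC_diff_right: "scaleC a (x - y) = scaleC a x - scaleC a (y::'a::complex_inner)"
  by (simp only: diff_conv_add_uminus scaleC_add_right scaleC_minus_right)

lemma scaleC_scaleR_comm: "scaleC a (scaleR r x) = scaleR r (scaleC a (x::'a::complex_inner))"
  by (simp add: scaleR_scaleC scaleC_scaleC mult.commute)

lemma norm_scaleC: "norm (scaleC a x) = cmod a * norm (x::'a::complex_inner)"
proof -
  have "cinner (scaleC a x) (scaleC a x) = cnj a * a * cinner x x"
    by (simp add: cinner_scaleC_left cinner_scaleC_right mult.assoc)
  then have "complex_of_real ((norm (scaleC a x))^2) = cnj a * a * complex_of_real ((norm x)^2)"
    by (simp only: cinner_self_norm)
  also have "cnj a * a = complex_of_real ((cmod a)^2)" by (metis complex_norm_square mult.commute complex_cnj_cnj)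
  then have "cnj a * a * complex_of_real ((norm x)^2) = complex_of_real ((cmod a)^2) * complex_of_real ((norm x)^2)"
    by simp
  also have "\<dots> = complex_of_real ((cmod a * norm x)^2)"
    by (simp only: of_real_mult[symmetric] power_mult_distrib)
  finally have "(norm (scaleC a x))^2 = (cmod a * norm x)^2" using of_real_eq_iff by blast
  then show ?thesis by (simp add: power2_eq_iff_nonneg)
qed

lemma bounded_linear_scaleC: "bounded_linear (scaleC a :: 'a::complex_inner \<Rightarrow> 'a)"
  by (rule bounded_linear_intro[where K="cmod a"])
     (simp_all add: scaleC_add_right scaleC_scaleR_comm norm_scaleC mult.commute)



lemma bop_bl: "bounded_op T \<Longrightarrow> bounded_linear T"
  by (simp add: bounded_op_def)

lemma bop_scaleC: "bounded_op T \<Longrightarrow> T (scaleC c x) = scaleC c (T x)"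
  by (simp add: bounded_op_def)

lemma bop_add: "bounded_op T \<Longrightarrow> T (x + y) = T x + T y"
  using bop_bl[THEN bounded_linear.linear] linear_add by blast

lemma bop_diff: "bounded_op T \<Longrightarrow> T (x - y) = T x - T y"
  using bop_bl[THEN bounded_linear.linear] linear_diff by blast

lemma bop_zero: "bounded_op T \<Longrightarrow> T 0 = 0"
  using bop_bl[THEN bounded_linear.linear] linear_0 by blast

lemma bop_scaleR: "bounded_op T \<Longrightarrow> T (scaleR r x) = scaleR r (T x)"
  using bop_bl[THEN bounded_linear.linear] linear_scale by blast

lemma bop_sum: "bounded_op T \<Longrightarrow> T (sum f A) = (\<Sum>a\<in>A. T (f a))"
  using bop_bl[THEN bounded_linear.linear] linear_sum by blast

lemma bop_norm: "bounded_op T \<Longrightarrow> norm (T x) \<le> onorm T * norm x"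
  using bop_bl onorm by blast

lemma bop_onorm_nonneg: "bounded_op T \<Longrightarrow> 0 \<le> onorm T"
  using bop_bl onorm_pos_le by blast

lemma bop_id: "bounded_op (\<lambda>x::'a::complex_inner. x)"
  by (simp add: bounded_op_def)

lemma bop_comp: "bounded_op S \<Longrightarrow> bounded_op T \<Longrightarrow> bounded_op (\<lambda>x. S (T x))"
  by (simp add: bounded_op_def bounded_linear_compose)

lemma bop_o: "bounded_op S \<Longrightarrow> bounded_op T \<Longrightarrow> bounded_op (S \<circ> T)"
  by (simp add: bop_comp comp_def)

lemma bop_minus_op: "bounded_op S \<Longrightarrow> bounded_op T \<Longrightarrow> bounded_op (\<lambda>x. S x - T x)"
  by (simp add: bounded_op_def bounded_linear_sub scaleC_diff_right)

lemma bop_plus_op: "bounded_op S \<Longrightarrow> bounded_op T \<Longrightarrow> bounded_op (\<lambda>x. S x + T x)"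
  by (simp add: bounded_op_def bounded_linear_add scaleC_add_right)

lemma bop_scaleR_op: "bounded_op T \<Longrightarrow> bounded_op (\<lambda>x. scaleR r (T x))"
  by (simp add: bounded_op_def bounded_linear_compose[OF bounded_linear_scaleR_right] scaleC_scaleR_comm)

lemma bop_funpow: "bounded_op T \<Longrightarrow> bounded_op (T ^^ n)"
proof (induction n)
  case 0 then show ?case by (simp add: bop_id id_def)
next
  case (Suc n) then show ?case using bop_o by (metis funpow.simps(2))
qed

lemma pos_bop: "positive_op T \<Longrightarrow> bounded_op T"
  by (simp add: positive_op_def)

lemma pos_ge: "positive_op T \<Longrightarrow> 0 \<le> cinner y (T y)"
  by (simp add: positive_op_def)

lemma pos_Im: "positive_op T \<Longrightarrow> Im (cinner y (T y)) = 0"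
  using pos_ge[of T y] by (simp add: less_eq_complex_def)

lemma pos_Re: "positive_op T \<Longrightarrow> 0 \<le> Re (cinner y (T y))"
  using pos_ge[of T y] by (simp add: less_eq_complex_def)

lemma pos_real: "positive_op T \<Longrightarrow> cinner y (T y) = complex_of_real (Re (cinner y (T y)))"
  using pos_Im by (simp add: complex_eq_iff)

lemma quad_expand:
  assumes "bounded_op T"
  shows "cinner (scaleC a u + scaleC b v) (T (scaleC a u + scaleC b v)) =
     cnj a * a * cinner u (T u) + cnj a * b * cinner u (T v) + cnj b * a * cinner v (T u) + cnj b * b * cinner v (T v)"
  using assms by (simp add: bop_add bop_scaleC cinner_add_left cinner_add_right cinner_scaleC_left
      cinner_scaleC_right algebra_simps)

lemma pos_sa:
  assumes "positive_op T"
  shows "cinner u (T v) = cinner (T u) v"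
proof -
  have b: "bounded_op T" using assms by (rule pos_bop)
  have e1: "cinner (u+v) (T (u+v)) = cinner u (T u) + cinner u (T v) + cinner v (T u) + cinner v (T v)"
    using quad_expand[OF b, of 1 u 1 v] by (simp add: scaleC_one)
  have e2: "cinner (u + scaleC \<i> v) (T (u + scaleC \<i> v)) =
      cinner u (T u) + \<i> * cinner u (T v) - \<i> * cinner v (T u) + cinner v (T v)"
    using quad_expand[OF b, of 1 u \<i> v] by (simp add: scaleC_one)
  have i1: "Im (cinner u (T v)) + Im (cinner v (T u)) = 0"
    using arg_cong[OF e1, of Im] pos_Im[OF assms] by simp
  have i2: "Re (cinner u (T v)) - Re (cinner v (T u)) = 0"
    using arg_cong[OF e2, of Im] pos_Im[OF assms] by simp
  have "cinner (T u) v = cnj (cinner v (T u))" by (rule cinner_cnj)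
  then show ?thesis using i1 i2 by (simp add: complex_eq_iff)
qed

lemma pos_CS:
  assumes B: "positive_op B"
  shows "(cmod (cinner u (B v)))^2 \<le> Re (cinner u (B u)) * Re (cinner v (B v))"
proof -
  have b: "bounded_op B" using B by (rule pos_bop)
  define \<alpha> where "\<alpha> = cinner v (B u)"
  define a where "a = Re (cinner v (B v))"
  define c where "c = Re (cinner u (B u))"
  have sa: "cinner u (B v) = cnj \<alpha>"
    unfolding \<alpha>_def using pos_sa[OF B, of u v] cinner_cnj[of "B u" v] by simp
  have Qv: "cinner v (B v) = complex_of_real a" unfolding a_def using pos_real[OF B] .
  have Qu: "cinner u (B u) = complex_of_real c" unfolding c_def using pos_real[OF B] .
  have n1: "\<alpha> * cnj \<alpha> = complex_of_real ((cmod \<alpha>)^2)" by (rule complex_norm_square[symmetric])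
  have n2: "cnj \<alpha> * \<alpha> = complex_of_real ((cmod \<alpha>)^2)" by (metis complex_norm_square mult.commute)
  have a0: "0 \<le> a" unfolding a_def using pos_Re[OF B] .
  have goal: "(cmod \<alpha>)^2 \<le> c * a"
  proof (cases "a = 0")
    case False
    then have apos: "0 < a" using a0 by simp
    define w where "w = scaleC (complex_of_real a) u + scaleC (- \<alpha>) v"
    have "cinner w (B w) = complex_of_real a * complex_of_real a * complex_of_real c
        + complex_of_real a * (- \<alpha>) * cnj \<alpha> + cnj (- \<alpha>) * complex_of_real a * \<alpha>
        + cnj (- \<alpha>) * (- \<alpha>) * complex_of_real a"
      unfolding w_def quad_expand[OF b] sa Qu Qv \<alpha>_def[symmetric] by simp
    also have "\<dots> = complex_of_real (a * a * c - a * (cmod \<alpha>)^2)"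
    proof -
      have "complex_of_real a * (- \<alpha>) * cnj \<alpha> = - complex_of_real a * complex_of_real ((cmod \<alpha>)^2)"
        using n1 by (simp add: mult.assoc)
      moreover have "cnj (- \<alpha>) * complex_of_real a * \<alpha> = - complex_of_real a * complex_of_real ((cmod \<alpha>)^2)"
        using n2 by (simp add: mult.commute mult.left_commute)
      moreover have "cnj (- \<alpha>) * (- \<alpha>) * complex_of_real a = complex_of_real a * complex_of_real ((cmod \<alpha>)^2)"
        using n2 by (simp add: mult.commute)
      ultimately show ?thesis by simp
    qed
    finally have "0 \<le> a * a * c - a * (cmod \<alpha>)^2"
      using pos_Re[OF B, of w] by simp
    then have "0 \<le> a * (a * c - (cmod \<alpha>)^2)" by (simp add: algebra_simps)
    then have "0 \<le> a * c - (cmod \<alpha>)^2" using apos by (simp add: zero_le_mult_iff)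
    then show ?thesis by (simp add: mult.commute)
  next
    case True
    have key: "2 * t * (cmod \<alpha>)^2 \<le> c" for t :: real
    proof -
      define w where "w = scaleC 1 u + scaleC (- complex_of_real t * \<alpha>) v"
      have "cinner w (B w) = complex_of_real c
        + (- complex_of_real t * \<alpha>) * cnj \<alpha> + cnj (- complex_of_real t * \<alpha>) * \<alpha>"
        unfolding w_def quad_expand[OF b] sa Qu Qv \<alpha>_def[symmetric] True by simp
      also have "\<dots> = complex_of_real (c - 2 * t * (cmod \<alpha>)^2)"
      proof -
        have "(- complex_of_real t * \<alpha>) * cnj \<alpha> = - complex_of_real t * complex_of_real ((cmod \<alpha>)^2)"
          using n1 by (simp add: mult.assoc)
        moreover have "cnj (- complex_of_real t * \<alpha>) * \<alpha> = - complex_of_real t * complex_of_real ((cmod \<alpha>)^2)"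
          using n2 by (simp add: mult.assoc)
        ultimately show ?thesis by simp
      qed
      finally show ?thesis using pos_Re[OF B, of w] by simp
    qed
    show ?thesis
    proof (rule ccontr)
      assume "\<not> ?thesis"
      then have p: "0 < (cmod \<alpha>)^2" using True by simp
      have "2 * ((c + 1) / (2 * (cmod \<alpha>)^2)) * (cmod \<alpha>)^2 \<le> c" by (rule key)
      then have "c + 1 \<le> c" using p by (simp add: field_simps)
      then show False by simp
    qed
  qed
  have "cmod (cinner u (B v)) = cmod \<alpha>" using sa by simp
  then show ?thesis using goal unfolding a_def c_def by simp
qed


lemma sq_le_aux: "(0::real) < a \<Longrightarrow> a^2 \<le> K * a * r \<Longrightarrow> a \<le> K * r"
proof -
  assume a: "0 < a" and h: "a^2 \<le> K * a * r"
  have "a * a \<le> a * (K * r)" using h by (simp add: power2_eq_square algebra_simps)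
  then show ?thesis using a mult_le_cancel_left_pos by blast
qed

lemma pos_norm_bound:
  assumes B: "positive_op B" and K: "0 \<le> K" and le: "\<And>y. Re (cinner y (B y)) \<le> K * (norm y)^2"
  shows "(norm (B z))^2 \<le> K * Re (cinner z (B z))"
proof (cases "B z = 0")
  case True
  then show ?thesis using K pos_Re[OF B, of z] by simp
next
  case False
  have "cinner (B z) (B z) = complex_of_real ((norm (B z))^2)" by (rule cinner_self_norm)
  then have "cmod (cinner (B z) (B z)) = \<bar>(norm (B z))^2\<bar>" by (simp only: norm_of_real)
  then have "cmod (cinner (B z) (B z)) = (norm (B z))^2" by simp
  then have "((norm (B z))^2)^2 \<le> Re (cinner (B z) (B (B z))) * Re (cinner z (B z))"
    using pos_CS[OF B, of "B z" z] by simp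
  also have "\<dots> \<le> (K * (norm (B z))^2) * Re (cinner z (B z))"
    using le[of "B z"] pos_Re[OF B, of z] by (simp add: mult_right_mono)
  finally have h: "((norm (B z))^2)^2 \<le> K * (norm (B z))^2 * Re (cinner z (B z))" .
  have "0 < (norm (B z))^2" using False by simp
  then show ?thesis using h by (rule sq_le_aux)
qed

lemma pos_id: "positive_op (\<lambda>x::'a::complex_inner. x)"
  by (simp add: positive_op_def bop_id cinner_ge_zero)

lemma cinner_CS: "cmod (cinner u v) \<le> norm u * norm (v::'a::complex_inner)"
proof -
  have "(cmod (cinner u v))^2 \<le> Re (cinner u u) * Re (cinner v v)"
    using pos_CS[OF pos_id, of u v] by simp
  also have "\<dots> = (norm u * norm v)^2" by (simp add: Re_cinner_self power_mult_distrib)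
  finally show ?thesis by (rule power2_le_imp_le) simp
qed

lemma bounded_linear_cinner_right: "bounded_linear (cinner (y::'a::complex_inner))"
proof (rule bounded_linear_intro[where K="norm y"])
  show "cinner y (a + b) = cinner y a + cinner y b" for a b by (rule cinner_add_right)
  show "cinner y (r *\<^sub>R a) = r *\<^sub>R cinner y a" for r a
    by (simp add: cinner_scaleR_right scaleR_conv_of_real)
  show "norm (cinner y a) \<le> norm a * norm y" for a
    using cinner_CS[of y a] by (simp add: mult.commute)
qed

lemma form_le: "bounded_op T \<Longrightarrow> Re (cinner y (T y)) \<le> onorm T * (norm y)^2"
proof -
  assume b: "bounded_op T"
  have "Re (cinner y (T y)) \<le> cmod (cinner y (T y))" by (rule complex_Re_le_cmod)
  also have "\<dots> \<le> norm y * norm (T y)" by (rule cinner_CS)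
  also have "\<dots> \<le> norm y * (onorm T * norm y)" using bop_norm[OF b] by (simp add: mult_left_mono)
  finally show ?thesis by (simp add: power2_eq_square algebra_simps)
qed

lemma pos_zero_form: "positive_op B \<Longrightarrow> Re (cinner z (B z)) = 0 \<Longrightarrow> B z = 0"
proof -
  assume B: "positive_op B" and z: "Re (cinner z (B z)) = 0"
  have "(norm (B z))^2 \<le> onorm B * Re (cinner z (B z))"
    by (rule pos_norm_bound[OF B bop_onorm_nonneg[OF pos_bop[OF B]] form_le[OF pos_bop[OF B]]])
  then show "B z = 0" using z by simp
qed

definition selfadj :: "('a::complex_inner \<Rightarrow> 'a) \<Rightarrow> bool" where
  "selfadj T \<longleftrightarrow> (\<forall>u v. cinner u (T v) = cinner (T u) v)"

lemma pos_selfadj: "positive_op T \<Longrightarrow> selfadj T"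
  by (simp add: selfadj_def pos_sa)

lemma selfadj_real: "selfadj T \<Longrightarrow> Im (cinner y (T y)) = 0"
proof -
  assume "selfadj T"
  then have "cinner y (T y) = cinner (T y) y" by (simp add: selfadj_def)
  also have "\<dots> = cnj (cinner y (T y))" by (rule cinner_cnj)
  finally show ?thesis by (metis Reals_cnj_iff complex_is_Real_iff)
qed

lemma selfadj_funpow: "selfadj T \<Longrightarrow> selfadj (T ^^ n)"
proof (induction n)
  case 0 then show ?case by (simp add: selfadj_def)
next
  case (Suc n)
  show ?case unfolding selfadj_def
  proof (intro allI)
    fix u v
    have "cinner u ((T ^^ Suc n) v) = cinner u (T ((T ^^ n) v))" by simp
    also have "\<dots> = cinner (T u) ((T ^^ n) v)" using Suc.prems by (simp add: selfadj_def)
    also have "\<dots> = cinner ((T ^^ n) (T u)) v" using Suc.IH[OF Suc.prems] by (simp add: selfadj_def)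
    also have "\<dots> = cinner ((T ^^ Suc n) u) v" by (simp add: funpow_Suc_right del: funpow.simps)
    finally show "cinner u ((T ^^ Suc n) v) = cinner ((T ^^ Suc n) u) v" .
  qed
qed

lemma selfadj_minus: "selfadj S \<Longrightarrow> selfadj T \<Longrightarrow> selfadj (\<lambda>x. S x - T x)"
  by (simp add: selfadj_def cinner_diff_left cinner_diff_right)

section \<open>Coefficients of the square root series\<close>

function coef :: "nat \<Rightarrow> real" where
  "coef n = (if n = 0 then 0 else if n = 1 then 1/2 else (\<Sum>k\<in>{1..<n}. coef k * coef (n - k)) / 2)"
  by auto
termination by (relation "Wellfounded.measure id") auto

declare coef.simps [simp del]

lemma coef_0 [simp]: "coef 0 = 0" by (simp add: coef.simps)
lemma coef_1 [simp]: "coef 1 = 1/2" by (simp add: coef.simps)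
lemma coef_Suc0 [simp]: "coef (Suc 0) = 1/2" by (simp add: coef.simps)

lemma coef_nonneg: "0 \<le> coef n"
proof (induction n rule: less_induct)
  case (less n)
  then show ?case
    by (subst coef.simps) (auto intro!: sum_nonneg divide_nonneg_pos mult_nonneg_nonneg)
qed

lemma coef_conv: "(\<Sum>i\<le>n. coef i * coef (n - i)) = 2 * coef n - (if n = 1 then 1 else 0)"
proof -
  consider "n = 0" | "n = 1" | "n \<ge> 2" by linarith
  then show ?thesis
  proof cases
    case 1 then show ?thesis by simp
  next
    case 2 then show ?thesis by (simp add: atMost_Suc)
  next
    case 3
    have "{..n} = insert 0 (insert n {1..<n})" using 3 by auto
    then have "(\<Sum>i\<le>n. coef i * coef (n - i)) = (\<Sum>i\<in>{1..<n}. coef i * coef (n - i))"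
      using 3 by simp
    also have "\<dots> = 2 * coef n" using 3 by (subst (2) coef.simps) simp
    finally show ?thesis using 3 by simp
  qed
qed

lemma tri_le_square:
  assumes "1 \<le> N"
  shows "(\<Sum>(i,j)\<in>{(i,j). i + j < N}. coef i * coef j) \<le> (\<Sum>i<N-1. coef i)^2"
proof -
  let ?f = "\<lambda>(i,j). coef i * coef j"
  let ?T = "{(i,j). i + j < N}"
  let ?Q = "{..<N-1} \<times> {..<N-1}"
  have fT: "finite ?T"
    by (rule finite_subset[of _ "{..<N} \<times> {..<N}"]) auto
  have "sum ?f ?T = sum ?f (?T \<inter> ?Q)"
  proof (rule sum.mono_neutral_right[OF fT])
    show "?T \<inter> ?Q \<subseteq> ?T" by auto
    show "\<forall>x\<in>?T - ?T \<inter> ?Q. ?f x = 0"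
    proof
      fix x assume x: "x \<in> ?T - ?T \<inter> ?Q"
      obtain i j where ij: "x = (i,j)" by (cases x)
      have "i = 0 \<or> j = 0" using x ij assms by auto
      then show "?f x = 0" using ij by auto
    qed
  qed
  also have "\<dots> \<le> sum ?f ?Q"
    by (rule sum_mono2) (auto intro!: mult_nonneg_nonneg coef_nonneg)
  also have "\<dots> = (\<Sum>i<N-1. coef i) * (\<Sum>j<N-1. coef j)"
    by (simp add: sum_product sum.cartesian_product)
  finally show ?thesis by (simp add: power2_eq_square)
qed

lemma coef_psum_le1: "(\<Sum>i<N. coef i) \<le> 1"
proof (induction N rule: less_induct)
  case (less N)
  show ?case
  proof (cases "N = 0")
    case True then show ?thesis by simp
  next
    case False
    have c: "coef n = ((\<Sum>i\<le>n. coef i * coef (n - i)) + (if n = 1 then 1 else 0)) / 2" for n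
      using coef_conv[of n] by simp
    have "(\<Sum>n<N. coef n) = (\<Sum>n<N. ((\<Sum>i\<le>n. coef i * coef (n - i)) + (if n = 1 then 1 else 0)) / 2)"
      by (rule sum.cong[OF refl]) (rule c)
    also have "\<dots> = (\<Sum>n<N. ((\<Sum>i\<le>n. coef i * coef (n - i)) + (if n = 1 then 1 else 0))) / 2"
      by (simp only: sum_divide_distrib)
    also have "\<dots> = ((\<Sum>n<N. \<Sum>i\<le>n. coef i * coef (n - i)) + (\<Sum>n<N. (if n = 1 then 1 else 0))) / 2"
      by (simp only: sum.distrib)
    also have "(\<Sum>n<N. \<Sum>i\<le>n. coef i * coef (n - i)) = (\<Sum>(i,j)\<in>{(i,j). i + j < N}. coef i * coef j)"
      by (rule sum.triangle_reindex[symmetric])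
    also have "\<dots> \<le> (\<Sum>i<N-1. coef i)^2" using False by (intro tri_le_square) simp
    also have "\<dots> \<le> 1"
    proof -
      have "0 \<le> (\<Sum>i<N-1. coef i)" by (auto intro!: sum_nonneg coef_nonneg)
      moreover have "(\<Sum>i<N-1. coef i) \<le> 1" using less False by simp
      ultimately show ?thesis by (simp add: power_le_one)
    qed
    also have "(\<Sum>n<N. (if n = 1 then 1 else 0::real)) \<le> 1"
    proof -
      have "(\<Sum>n<N. (if n = 1 then 1 else 0::real)) = (if 1 < N then 1 else 0)"
        by (simp add: sum.delta)
      then show ?thesis by simp
    qed
    finally show ?thesis by simp
  qed
qed

lemma coef_summable: "summable coef"
  by (rule summableI_nonneg_bounded[where x=1]) (simp_all add: coef_nonneg coef_psum_le1)

lemma coef_suminf: "(\<Sum>n. coef n) = 1"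
proof -
  have sn: "summable (\<lambda>k. norm (coef k))" using coef_summable coef_nonneg by simp
  have "(\<Sum>k. coef k) * (\<Sum>k. coef k) = (\<Sum>k. \<Sum>i\<le>k. coef i * coef (k - i))"
    by (rule Cauchy_product[OF sn sn])
  also have "\<dots> = (\<Sum>k. 2 * coef k - (if k = 1 then 1 else 0))"
    by (simp add: coef_conv)
  also have "\<dots> = 2 * (\<Sum>k. coef k) - 1"
  proof -
    have s1: "(\<lambda>k. if k = 1 then 1 else (0::real)) sums 1"
      using sums_single[of 1 "\<lambda>_. 1::real"] by simp
    have "(\<lambda>k. 2 * coef k - (if k = 1 then 1 else 0)) sums (2 * (\<Sum>k. coef k) - 1)"
      by (intro sums_diff sums_mult summable_sums coef_summable s1)
    then show ?thesis by (rule sums_unique[symmetric])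
  qed
  finally have "((\<Sum>k. coef k) - 1)^2 = 0" by (simp add: power2_eq_square algebra_simps)
  then show ?thesis by simp
qed

lemma coef_psum_lim: "(\<lambda>N. \<Sum>i<N. coef i) \<longlonglongrightarrow> 1"
  using summable_LIMSEQ[OF coef_summable] coef_suminf by simp


section \<open>The square root series\<close>

instance chilbert_space \<subseteq> banach ..

locale contr =
  fixes A :: "'a::chilbert_space \<Rightarrow> 'a"
  assumes A_bop: "bounded_op A" and A_sa: "selfadj A" and A_contr: "\<And>y. norm (A y) \<le> norm y"
begin

lemma Ak_bop: "bounded_op (A ^^ k)"
  using bop_funpow A_bop by blast

lemma Ak_contr: "norm ((A ^^ k) y) \<le> norm y"
proof (induction k)
  case 0 then show ?case by simp
next
  case (Suc k) then show ?case using A_contr[of "(A ^^ k) y"] by simp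
qed

lemma Ak_add: "(A ^^ j) ((A ^^ k) y) = (A ^^ (j + k)) y"
  by (simp add: funpow_add)

lemma term_bound: "norm (coef k *\<^sub>R (A ^^ k) y) \<le> coef k * norm y"
  using Ak_contr[of k y] coef_nonneg[of k] by (simp add: mult_left_mono)

lemma Ysummable: "summable (\<lambda>k. coef k *\<^sub>R (A ^^ k) y)"
proof (rule summable_comparison_test[where g="\<lambda>k. coef k * norm y"])
  show "\<exists>N. \<forall>n\<ge>N. norm (coef n *\<^sub>R (A ^^ n) y) \<le> coef n * norm y"
    using term_bound by blast
  show "summable (\<lambda>k. coef k * norm y)" by (intro summable_mult2 coef_summable)
qed

definition Yp :: "nat \<Rightarrow> 'a \<Rightarrow> 'a" where "Yp N y = (\<Sum>k<N. coef k *\<^sub>R (A ^^ k) y)"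
definition Y :: "'a \<Rightarrow> 'a" where "Y y = (\<Sum>k. coef k *\<^sub>R (A ^^ k) y)"

lemma Yp_lim: "(\<lambda>N. Yp N y) \<longlonglongrightarrow> Y y"
  unfolding Yp_def Y_def by (rule summable_LIMSEQ[OF Ysummable])

lemma Yp_norm: "norm (Yp N u) \<le> norm u"
proof -
  have "norm (Yp N u) \<le> (\<Sum>k<N. norm (coef k *\<^sub>R (A ^^ k) u))"
    unfolding Yp_def by (rule norm_sum)
  also have "\<dots> \<le> (\<Sum>k<N. coef k * norm u)" by (intro sum_mono term_bound)
  also have "\<dots> = (\<Sum>k<N. coef k) * norm u" by (simp add: sum_distrib_right)
  also have "\<dots> \<le> 1 * norm u" by (intro mult_right_mono coef_psum_le1) simp
  finally show ?thesis by simp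
qed

lemma Y_norm: "norm (Y u) \<le> norm u"
  by (rule LIMSEQ_le_const2[OF tendsto_norm[OF Yp_lim]]) (simp add: Yp_norm)

lemma Yp_diff: "Yp N (u - v) = Yp N u - Yp N v"
  unfolding Yp_def by (simp add: bop_diff[OF Ak_bop] scaleR_diff_right sum_subtractf)

lemma Y_add: "Y (u + v) = Y u + Y v"
  unfolding Y_def by (simp add: bop_add[OF Ak_bop] scaleR_add_right suminf_add[OF Ysummable Ysummable])

lemma Y_scaleC: "Y (scaleC c u) = scaleC c (Y u)"
  unfolding Y_def
  by (simp add: bounded_linear.suminf[OF bounded_linear_scaleC Ysummable] bop_scaleC[OF Ak_bop]
      scaleC_scaleR_comm)

lemma Y_bop: "bounded_op Y"
proof -
  have "bounded_linear Y"
    by (rule bounded_linear_intro[where K=1]) (simp_all add: Y_add scaleR_scaleC Y_scaleC Y_norm)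
  then show ?thesis by (simp add: bounded_op_def Y_scaleC)
qed

lemma Y_diff: "Y (u - v) = Y u - Y v"
  by (rule bop_diff[OF Y_bop])

lemma YpYp_lim: "(\<lambda>N. Yp N (Yp N y)) \<longlonglongrightarrow> Y (Y y)"
proof -
  have "(\<lambda>N. Yp N (Yp N y) - Y (Y y)) \<longlonglongrightarrow> 0"
  proof (rule Lim_null_comparison)
    show "\<forall>\<^sub>F N in sequentially. norm (Yp N (Yp N y) - Y (Y y)) \<le>
       norm (Yp N y - Y y) + norm (Yp N (Y y) - Y (Y y))"
    proof (rule always_eventually, rule allI)
      fix N
      have eq: "Yp N (Yp N y) - Y (Y y) = Yp N (Yp N y - Y y) + (Yp N (Y y) - Y (Y y))"
        by (simp add: Yp_diff)
      have "norm (Yp N (Yp N y) - Y (Y y)) \<le> norm (Yp N (Yp N y - Y y)) + norm (Yp N (Y y) - Y (Y y))"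
        unfolding eq by (rule norm_triangle_ineq)
      also have "\<dots> \<le> norm (Yp N y - Y y) + norm (Yp N (Y y) - Y (Y y))"
        using Yp_norm by simp
      finally show "norm (Yp N (Yp N y) - Y (Y y)) \<le> norm (Yp N y - Y y) + norm (Yp N (Y y) - Y (Y y))" .
    qed
    have "(\<lambda>N. Yp N y - Y y) \<longlonglongrightarrow> 0" using Yp_lim LIM_zero by blast
    moreover have "(\<lambda>N. Yp N (Y y) - Y (Y y)) \<longlonglongrightarrow> 0" using Yp_lim LIM_zero by blast
    ultimately show "(\<lambda>N. norm (Yp N y - Y y) + norm (Yp N (Y y) - Y (Y y))) \<longlonglongrightarrow> 0"
      by (simp add: tendsto_add_zero tendsto_norm_zero)
  qed
  then show ?thesis by (rule LIM_zero_cancel)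
qed


lemma YpYp_expand: "Yp N (Yp N y) = (\<Sum>(j,k)\<in>{..<N}\<times>{..<N}. (coef j * coef k) *\<^sub>R (A ^^ (j + k)) y)"
proof -
  have "Yp N (Yp N y) = (\<Sum>j<N. coef j *\<^sub>R (A ^^ j) (\<Sum>k<N. coef k *\<^sub>R (A ^^ k) y))"
    unfolding Yp_def ..
  also have "\<dots> = (\<Sum>j<N. \<Sum>k<N. (coef j * coef k) *\<^sub>R (A ^^ (j + k)) y)"
    by (simp add: bop_sum[OF Ak_bop] bop_scaleR[OF Ak_bop] scaleR_sum_right Ak_add)
  also have "\<dots> = (\<Sum>(j,k)\<in>{..<N}\<times>{..<N}. (coef j * coef k) *\<^sub>R (A ^^ (j + k)) y)"
    by (simp add: sum.cartesian_product)
  finally show ?thesis .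
qed

lemma lin_expand:
  assumes N: "2 \<le> N"
  shows "2 *\<^sub>R Yp N y - A y = (\<Sum>(i,j)\<in>{(i,j). i + j < N}. (coef i * coef j) *\<^sub>R (A ^^ (i + j)) y)"
proof -
  have d: "(\<Sum>n<N. (if n = 1 then 1 else 0) *\<^sub>R (A ^^ n) y) = A y"
  proof -
    have "(\<Sum>n<N. (if n = 1 then 1 else 0) *\<^sub>R (A ^^ n) y) = (\<Sum>n<N. (if n = 1 then (A ^^ n) y else 0))"
      by (rule sum.cong) auto
    also have "\<dots> = A y" using N by (simp add: sum.delta)
    finally show ?thesis .
  qed
  have "2 *\<^sub>R Yp N y - A y = (\<Sum>n<N. (2 * coef n) *\<^sub>R (A ^^ n) y) - (\<Sum>n<N. (if n = 1 then 1 else 0) *\<^sub>R (A ^^ n) y)"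
    unfolding Yp_def d by (simp add: scaleR_sum_right)
  also have "\<dots> = (\<Sum>n<N. (2 * coef n - (if n = 1 then 1 else 0)) *\<^sub>R (A ^^ n) y)"
    by (simp add: scaleR_diff_left sum_subtractf)
  also have "\<dots> = (\<Sum>n<N. (\<Sum>i\<le>n. coef i * coef (n - i)) *\<^sub>R (A ^^ n) y)"
    by (simp add: coef_conv)
  also have "\<dots> = (\<Sum>n<N. \<Sum>i\<le>n. (coef i * coef (n - i)) *\<^sub>R (A ^^ (i + (n - i))) y)"
    by (auto simp: scaleR_sum_left intro!: sum.cong)
  also have "\<dots> = (\<Sum>(i,j)\<in>{(i,j). i + j < N}. (coef i * coef j) *\<^sub>R (A ^^ (i + j)) y)"
    by (rule sum.triangle_reindex[symmetric])
  finally show ?thesis .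
qed

lemma E_bound:
  assumes N: "2 \<le> N"
  shows "norm (2 *\<^sub>R Yp N y - A y - Yp N (Yp N y)) \<le> ((\<Sum>i<N. coef i) - 1)^2 * norm y"
proof -
  define g where "g = (\<lambda>(i,j). (coef i * coef j) *\<^sub>R (A ^^ (i + j)) y)"
  define h where "h = (\<lambda>(i::nat,j::nat). coef i * coef j)"
  define Q where "Q = {..<N}\<times>{..<N}"
  define T where "T = {(i::nat,j::nat). i + j < N}"
  have sub: "T \<subseteq> Q" unfolding T_def Q_def by auto
  have fQ: "finite Q" unfolding Q_def by simp
  have "2 *\<^sub>R Yp N y - A y - Yp N (Yp N y) = sum g T - sum g Q"
    unfolding g_def T_def Q_def using lin_expand[OF N] YpYp_expand by simp
  also have "sum g Q = sum g (Q - T) + sum g T" by (rule sum.subset_diff[OF sub fQ])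
  finally have e: "2 *\<^sub>R Yp N y - A y - Yp N (Yp N y) = - sum g (Q - T)" by simp
  have "norm (sum g (Q - T)) \<le> sum (\<lambda>x. norm (g x)) (Q - T)" by (rule norm_sum)
  also have "\<dots> \<le> sum (\<lambda>x. h x * norm y) (Q - T)"
  proof (rule sum_mono)
    fix x assume "x \<in> Q - T"
    obtain i j where x: "x = (i,j)" by (cases x)
    have "norm (g x) = \<bar>coef i * coef j\<bar> * norm ((A ^^ (i + j)) y)" unfolding g_def x by simp
    also have "\<dots> \<le> (coef i * coef j) * norm y"
      using Ak_contr[of "i+j" y] coef_nonneg[of i] coef_nonneg[of j]
      by (simp add: mult_left_mono)
    finally show "norm (g x) \<le> h x * norm y" unfolding h_def x by simp
  qed
  also have "\<dots> = sum h (Q - T) * norm y" by (simp add: sum_distrib_right)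
  also have "sum h (Q - T) = sum h Q - sum h T"
    using sum.subset_diff[OF sub fQ, of h] by simp
  also have "sum h Q = (\<Sum>i<N. coef i)^2"
    unfolding h_def Q_def by (simp add: sum_product sum.cartesian_product power2_eq_square)
  also have "sum h T = 2 * (\<Sum>i<N. coef i) - 1"
  proof -
    have "sum h T = (\<Sum>n<N. \<Sum>i\<le>n. coef i * coef (n - i))"
      unfolding h_def T_def by (rule sum.triangle_reindex)
    also have "\<dots> = (\<Sum>n<N. 2 * coef n - (if n = 1 then 1 else 0))" by (simp add: coef_conv)
    also have "\<dots> = 2 * (\<Sum>i<N. coef i) - (\<Sum>n<N. (if n = 1 then 1 else 0))"
      by (simp add: sum_subtractf sum_distrib_left)
    also have "(\<Sum>n<N. (if n = 1 then 1 else 0::real)) = 1" using N by (simp add: sum.delta)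
    finally show ?thesis .
  qed
  finally have "norm (sum g (Q - T)) \<le> ((\<Sum>i<N. coef i)^2 - (2 * (\<Sum>i<N. coef i) - 1)) * norm y" .
  also have "(\<Sum>i<N. coef i)^2 - (2 * (\<Sum>i<N. coef i) - 1) = ((\<Sum>i<N. coef i) - 1)^2"
    by (simp add: power2_eq_square algebra_simps)
  finally show ?thesis using e by simp
qed

lemma YY: "Y (Y y) = 2 *\<^sub>R Y y - A y"
proof -
  let ?E = "\<lambda>N. 2 *\<^sub>R Yp N y - A y - Yp N (Yp N y)"
  have l1: "?E \<longlonglongrightarrow> 2 *\<^sub>R Y y - A y - Y (Y y)"
    by (intro tendsto_intros Yp_lim YpYp_lim)
  have l2: "?E \<longlonglongrightarrow> 0"
  proof (rule Lim_null_comparison)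
    show "\<forall>\<^sub>F N in sequentially. norm (?E N) \<le> ((\<Sum>i<N. coef i) - 1)^2 * norm y"
      using E_bound eventually_sequentially by blast
    have "(\<lambda>N. ((\<Sum>i<N. coef i) - 1)^2 * norm y) \<longlonglongrightarrow> (1 - 1)^2 * norm y"
      by (intro tendsto_intros coef_psum_lim)
    then show "(\<lambda>N. ((\<Sum>i<N. coef i) - 1)^2 * norm y) \<longlonglongrightarrow> 0" by simp
  qed
  have "2 *\<^sub>R Y y - A y - Y (Y y) = 0" using LIMSEQ_unique[OF l1 l2] .
  then show ?thesis by (simp add: right_minus_eq)
qed

lemma Y_form:
  shows "Im (cinner y (Y y)) = 0" and "Re (cinner y (Y y)) \<le> (norm y)^2"
proof -
  let ?f = "\<lambda>k. cinner y (coef k *\<^sub>R (A ^^ k) y)"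
  have sf: "summable ?f" by (rule bounded_linear.summable[OF bounded_linear_cinner_right Ysummable])
  have e: "cinner y (Y y) = (\<Sum>k. ?f k)"
    unfolding Y_def by (rule bounded_linear.suminf[OF bounded_linear_cinner_right Ysummable])
  have imz: "Im (?f k) = 0" for k
    using selfadj_real[OF selfadj_funpow[OF A_sa, of k], of y] by (simp add: cinner_scaleR_right)
  show "Im (cinner y (Y y)) = 0" unfolding e Im_suminf[OF sf] imz by simp
  have rb: "Re (?f k) \<le> coef k * (norm y)^2" for k
  proof -
    have "Re (cinner y ((A ^^ k) y)) \<le> cmod (cinner y ((A ^^ k) y))" by (rule complex_Re_le_cmod)
    also have "\<dots> \<le> norm y * norm ((A ^^ k) y)" by (rule cinner_CS)
    also have "\<dots> \<le> norm y * norm y" using Ak_contr[of k y] by (simp add: mult_left_mono)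
    finally have "Re (cinner y ((A ^^ k) y)) \<le> (norm y)^2" by (simp add: power2_eq_square)
    then show ?thesis using coef_nonneg[of k] by (simp add: cinner_scaleR_right mult_left_mono)
  qed
  have "Re (cinner y (Y y)) = (\<Sum>k. Re (?f k))" unfolding e by (rule Re_suminf[OF sf])
  also have "\<dots> \<le> (\<Sum>k. coef k * (norm y)^2)"
    by (rule suminf_le[OF rb bounded_linear.summable[OF bounded_linear_Re sf] summable_mult2[OF coef_summable]])
  also have "\<dots> = (norm y)^2" using suminf_mult2[OF coef_summable, of "(norm y)^2"] coef_suminf by simp
  finally show "Re (cinner y (Y y)) \<le> (norm y)^2" .
qed

lemma Y_comm:
  assumes B: "bounded_op B" and c: "\<And>u. B (A u) = A (B u)"
  shows "B (Y y) = Y (B y)"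
proof -
  have Bk: "B ((A ^^ k) u) = (A ^^ k) (B u)" for k u
    by (induction k) (simp_all add: c)
  have "B (Y y) = (\<Sum>k. B (coef k *\<^sub>R (A ^^ k) y))"
    unfolding Y_def by (rule bounded_linear.suminf[OF bop_bl[OF B] Ysummable])
  also have "\<dots> = Y (B y)" unfolding Y_def by (simp add: bop_scaleR[OF B] Bk)
  finally show ?thesis .
qed

definition Sq :: "'a \<Rightarrow> 'a" where "Sq y = y - Y y"

lemma Sq_pos: "positive_op Sq"
proof -
  have "Sq = (\<lambda>y. y - Y y)" by (rule ext) (simp add: Sq_def)
  then have b: "bounded_op Sq" using bop_minus_op[OF bop_id Y_bop] by simp
  have "0 \<le> cinner y (Sq y)" for y
  proof -
    have e: "cinner y (Sq y) = complex_of_real ((norm y)^2) - cinner y (Y y)"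
      by (simp add: Sq_def cinner_diff_right cinner_self_norm)
    show ?thesis unfolding e less_eq_complex_def using Y_form[of y] by simp
  qed
  then show ?thesis using b by (simp add: positive_op_def)
qed

lemma SqSq: "Sq (Sq y) = y - A y"
  by (simp add: Sq_def Y_diff YY scaleR_2 algebra_simps)

lemma Sq_comm: "bounded_op B \<Longrightarrow> (\<And>u. B (A u) = A (B u)) \<Longrightarrow> B (Sq y) = Sq (B y)"
  by (simp add: Sq_def bop_diff Y_comm)

end


lemma sqrt_unique_aux:
  assumes R: "positive_op R" and S: "positive_op S" and sq: "\<And>y. R (R y) = S (S y)"
    and c: "\<And>y. S (R y) = R (S y)"
  shows "R y = S y"
proof -
  define D where "D = (\<lambda>y. R y - S y)"
  have bR: "bounded_op R" and bS: "bounded_op S" using R S by (simp_all add: pos_bop)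
  have DD: "D (D y) = 0" for y
  proof -
    define z where "z = D y"
    have "R z + S z = R (R y) - R (S y) + (S (R y) - S (S y))"
      unfolding z_def D_def by (simp add: bop_diff[OF bR] bop_diff[OF bS])
    also have "\<dots> = 0" using sq[of y] c[of y] by simp
    finally have "R z + S z = 0" .
    then have "cinner z (R z) + cinner z (S z) = 0" by (metis cinner_add_right cinner_zero_right)
    then have "Re (cinner z (R z)) + Re (cinner z (S z)) = 0" by (metis plus_complex.sel(1) zero_complex.sel(1))
    then have "Re (cinner z (R z)) = 0" and "Re (cinner z (S z)) = 0"
      using pos_Re[OF R, of z] pos_Re[OF S, of z] by linarith+
    then have "R z = 0" and "S z = 0" using pos_zero_form R S by blast+
    then have "D z = 0" unfolding D_def by simp
    then show "D (D y) = 0" unfolding z_def .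
  qed
  have saD: "selfadj D" unfolding D_def by (intro selfadj_minus pos_selfadj R S)
  have "(norm (D y))^2 = Re (cinner (D y) (D y))" by (simp add: Re_cinner_self)
  also have "\<dots> = Re (cinner y (D (D y)))" using saD by (simp add: selfadj_def)
  also have "\<dots> = 0" using DD by simp
  finally show ?thesis unfolding D_def by simp
qed

lemma sqrt_exists_unique:
  fixes T :: "'a::chilbert_space \<Rightarrow> 'a"
  assumes T: "positive_op T"
  shows "\<exists>!S. positive_op S \<and> S \<circ> S = T"
proof -
  have bT: "bounded_op T" using T by (rule pos_bop)
  define K where "K = onorm T + 1"
  have K: "0 < K" unfolding K_def using bop_onorm_nonneg[OF bT] by simp
  define A where "A = (\<lambda>y. y - (1/K) *\<^sub>R T y)"
  have bA: "bounded_op A" unfolding A_def by (intro bop_minus_op bop_id bop_scaleR_op bT)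
  have saA: "selfadj A" unfolding A_def
  proof (intro selfadj_minus)
    show "selfadj (\<lambda>x. x)" by (simp add: selfadj_def)
    show "selfadj (\<lambda>y. (1/K) *\<^sub>R T y)"
      using pos_sa[OF T] by (simp add: selfadj_def cinner_scaleR_left cinner_scaleR_right)
  qed
  have formA: "cinner y (A y) = complex_of_real ((norm y)^2 - Re (cinner y (T y)) / K)" for y
  proof -
    have "cinner y (A y) = complex_of_real ((norm y)^2) - complex_of_real (1/K) * cinner y (T y)"
      unfolding A_def by (simp add: cinner_diff_right cinner_scaleR_right cinner_self_norm)
    also have "cinner y (T y) = complex_of_real (Re (cinner y (T y)))" by (rule pos_real[OF T])
    finally show ?thesis by simp
  qed
  have lo: "0 \<le> (norm y)^2 - Re (cinner y (T y)) / K" for y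
  proof -
    have "Re (cinner y (T y)) \<le> onorm T * (norm y)^2" by (rule form_le[OF bT])
    also have "\<dots> \<le> K * (norm y)^2" unfolding K_def by (simp add: mult_right_mono)
    finally show ?thesis using K by (simp add: field_simps)
  qed
  have up: "Re (cinner y (A y)) \<le> 1 * (norm y)^2" for y
    using formA[of y] pos_Re[OF T, of y] K by simp
  have pA: "positive_op A"
    using bA lo formA by (simp add: positive_op_def less_eq_complex_def)
  have cA: "norm (A y) \<le> norm y" for y
  proof -
    have "(norm (A y))^2 \<le> 1 * Re (cinner y (A y))" by (rule pos_norm_bound[OF pA _ up]) simp
    also have "\<dots> \<le> (norm y)^2" using up[of y] by simp
    finally show ?thesis by (rule power2_le_imp_le) simp
  qed
  interpret contr A using bA saA cA by unfold_locales
  define R where "R = (\<lambda>y. sqrt K *\<^sub>R Sq y)"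
  have bSq: "bounded_op Sq" using Sq_pos by (rule pos_bop)
  have pR: "positive_op R"
  proof -
    have "bounded_op R" unfolding R_def by (intro bop_scaleR_op bSq)
    moreover have "0 \<le> cinner y (R y)" for y
    proof -
      have "cinner y (R y) = complex_of_real (sqrt K) * cinner y (Sq y)"
        unfolding R_def by (simp add: cinner_scaleR_right)
      moreover have "0 \<le> complex_of_real (sqrt K)" using K by (simp add: less_eq_complex_def)
      ultimately show ?thesis using pos_ge[OF Sq_pos, of y] by (simp add: mult_nonneg_nonneg)
    qed
    ultimately show ?thesis by (simp add: positive_op_def)
  qed
  have RR: "R (R y) = T y" for y
  proof -
    have "R (R y) = (sqrt K * sqrt K) *\<^sub>R Sq (Sq y)" unfolding R_def by (simp add: bop_scaleR[OF bSq])
    also have "\<dots> = K *\<^sub>R (y - A y)" using K by (simp add: SqSq)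
    also have "\<dots> = T y" using K unfolding A_def by simp
    finally show ?thesis .
  qed
  show ?thesis
  proof (rule ex1I[of _ R])
    show "positive_op R \<and> R \<circ> R = T" using pR RR by (auto simp: comp_def)
  next
    fix S assume S: "positive_op S \<and> S \<circ> S = T"
    then have pS: "positive_op S" and SS: "\<And>y. S (S y) = T y" by (auto simp: comp_def dest: fun_cong)
    have bS: "bounded_op S" using pS by (rule pos_bop)
    have cT: "S (T u) = T (S u)" for u using SS by metis
    have cA': "S (A u) = A (S u)" for u unfolding A_def by (simp add: bop_diff[OF bS] bop_scaleR[OF bS] cT)
    have cR: "S (R y) = R (S y)" for y unfolding R_def by (simp add: bop_scaleR[OF bS] Sq_comm[OF bS cA'])
    have "R y = S y" for y by (rule sqrt_unique_aux[OF pR pS]) (simp_all add: RR SS cR)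
    then show "S = R" by auto
  qed
qed

lemma op_sqrt_props:
  fixes T :: "'a::chilbert_space \<Rightarrow> 'a"
  assumes "positive_op T"
  shows "positive_op (op_sqrt T)" and "\<And>y. op_sqrt T (op_sqrt T y) = T y"
proof -
  have "positive_op (op_sqrt T) \<and> op_sqrt T \<circ> op_sqrt T = T"
    unfolding op_sqrt_def by (rule theI'[OF sqrt_exists_unique[OF assms]])
  then show "positive_op (op_sqrt T)" and "\<And>y. op_sqrt T (op_sqrt T y) = T y"
    by (auto simp: comp_def dest: fun_cong)
qed


section \<open>Monotone convergence of decreasing positive operators\<close>

lemma decr_conv:
  fixes Rn :: "nat \<Rightarrow> 'a::chilbert_space \<Rightarrow> 'a"
  assumes pos: "\<And>n. positive_op (Rn n)"
    and dec: "\<And>n y. Re (cinner y (Rn (Suc n) y)) \<le> Re (cinner y (Rn n y))"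
  shows "convergent (\<lambda>n. Rn n y)"
proof -
  define a where "a = (\<lambda>z n. Re (cinner z (Rn n z)))"
  have ds: "decseq (a z)" for z unfolding a_def by (rule decseq_SucI) (rule dec)
  have anonneg: "0 \<le> a z n" for z n unfolding a_def by (rule pos_Re[OF pos])
  define K where "K = onorm (Rn 0)"
  have K0: "0 \<le> K" unfolding K_def by (rule bop_onorm_nonneg[OF pos_bop[OF pos]])
  have key: "(norm (Rn m y - Rn n y))^2 \<le> K * (a y m - a y n)" if mn: "m \<le> n" for m n
  proof -
    define B where "B = (\<lambda>z. Rn m z - Rn n z)"
    have bB: "bounded_op B" unfolding B_def by (intro bop_minus_op pos_bop pos)
    have fB: "cinner z (B z) = complex_of_real (a z m - a z n)" for z
      unfolding B_def a_def using pos_Im[OF pos[of m], of z] pos_Im[OF pos[of n], of z]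
      by (simp add: cinner_diff_right complex_eq_iff)
    have pB: "positive_op B"
      using bB fB ds mn by (simp add: positive_op_def less_eq_complex_def decseq_def)
    have le: "Re (cinner z (B z)) \<le> K * (norm z)^2" for z
    proof -
      have "Re (cinner z (B z)) = a z m - a z n" using fB by simp
      also have "\<dots> \<le> a z 0"
      proof -
        have "a z m \<le> a z 0" using ds[of z] by (simp add: decseq_def)
        then show ?thesis using anonneg[of z n] by linarith
      qed
      also have "\<dots> \<le> K * (norm z)^2" unfolding a_def K_def by (rule form_le[OF pos_bop[OF pos]])
      finally show ?thesis .
    qed
    have "(norm (B y))^2 \<le> K * Re (cinner y (B y))" by (rule pos_norm_bound[OF pB K0 le])
    moreover have "Re (cinner y (B y)) = a y m - a y n" using fB[of y] by simp
    ultimately show ?thesis unfolding B_def by simp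
  qed
  have "\<forall>i. 0 \<le> a y i" using anonneg by blast
  then obtain L where L: "a y \<longlonglongrightarrow> L" by (rule decseq_convergent[OF ds[of y]])
  have ca: "Cauchy (a y)" using L by (rule LIMSEQ_imp_Cauchy)
  have "Cauchy (\<lambda>n. Rn n y)"
  proof (rule CauchyI)
    fix e :: real assume e: "0 < e"
    define e' where "e' = e^2 / (K + 1)"
    have e': "0 < e'" unfolding e'_def using e K0 by simp
    obtain M where M: "\<And>m n. m \<ge> M \<Longrightarrow> n \<ge> M \<Longrightarrow> norm (a y m - a y n) < e'"
      using CauchyD[OF ca e'] by blast
    have half: "norm (Rn m y - Rn n y) < e" if "m \<ge> M" "n \<ge> M" "m \<le> n" for m n
    proof -
      have d0: "0 \<le> a y m - a y n" using ds[of y] \<open>m \<le> n\<close> by (simp add: decseq_def)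
      have "(norm (Rn m y - Rn n y))^2 \<le> K * (a y m - a y n)" by (rule key[OF \<open>m \<le> n\<close>])
      also have "\<dots> \<le> (K + 1) * (a y m - a y n)" using d0 by (simp add: mult_right_mono)
      also have "\<dots> < (K + 1) * e'"
        using M[OF that(1,2)] d0 K0 by (intro mult_strict_left_mono) auto
      also have "\<dots> = e^2" unfolding e'_def using K0 by simp
      finally have h: "(norm (Rn m y - Rn n y))^2 < e^2" .
      show ?thesis by (rule power_less_imp_less_base[OF h]) (use e in simp)
    qed
    show "\<exists>M. \<forall>m\<ge>M. \<forall>n\<ge>M. norm (Rn m y - Rn n y) < e"
    proof (intro exI allI impI)
      fix m n assume "m \<ge> M" "n \<ge> M"
      then show "norm (Rn m y - Rn n y) < e"
        using half[of m n] half[of n m] by (cases "m \<le> n") (auto simp: norm_minus_commute)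
    qed
  qed
  then show ?thesis by (simp add: Cauchy_convergent_iff)
qed

lemma proj_pos: "orth_proj Q \<Longrightarrow> positive_op Q"
proof -
  assume Q: "orth_proj Q"
  have b: "bounded_op Q" using Q by (simp add: orth_proj_def)
  have "cinner z (Q z) = cinner (Q z) (Q z)" for z
  proof -
    have "Q \<circ> Q = Q" using Q by (simp add: orth_proj_def)
    then have "Q (Q z) = Q z" by (metis comp_apply)
    then have "cinner z (Q z) = cinner z (Q (Q z))" by simp
    also have "\<dots> = cinner (Q z) (Q z)" using Q by (simp add: orth_proj_def)
    finally show ?thesis .
  qed
  then have "0 \<le> cinner z (Q z)" for z using cinner_ge_zero[of "Q z"] by simp
  then show ?thesis using b by (simp add: positive_op_def)
qed

lemma proj_compl: "orth_proj Q \<Longrightarrow> orth_proj (\<lambda>y. y - Q y)"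
proof -
  assume Q: "orth_proj Q"
  have b: "bounded_op Q" using Q by (simp add: orth_proj_def)
  have QQ0: "Q \<circ> Q = Q" using Q by (simp add: orth_proj_def)
  have QQ: "Q (Q z) = Q z" for z using QQ0 by (metis comp_apply)
  have sa: "cinner (Q u) v = cinner u (Q v)" for u v using Q by (simp add: orth_proj_def)
  have "(\<lambda>y. y - Q y) \<circ> (\<lambda>y. y - Q y) = (\<lambda>y. y - Q y)"
    by (rule ext) (simp add: bop_diff[OF b] QQ)
  moreover have "cinner (x - Q x) y = cinner x (y - Q y)" for x y
    by (simp add: cinner_diff_left cinner_diff_right sa)
  ultimately show ?thesis unfolding orth_proj_def
    using bop_minus_op[OF bop_id b] by blast
qed

lemma sandwich_pos:
  assumes S: "positive_op S" and Q: "positive_op Q"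
  shows "positive_op (S \<circ> Q \<circ> S)"
proof -
  have b: "bounded_op (S \<circ> Q \<circ> S)" by (intro bop_o pos_bop S Q)
  have "0 \<le> cinner y ((S \<circ> Q \<circ> S) y)" for y
  proof -
    have "cinner y ((S \<circ> Q \<circ> S) y) = cinner (S y) (Q (S y))" using pos_sa[OF S] by simp
    then show ?thesis using pos_ge[OF Q] by simp
  qed
  then show ?thesis using b by (simp add: positive_op_def)
qed

locale tree =
  fixes m :: nat and P :: "nat \<Rightarrow> 'a::chilbert_space \<Rightarrow> 'a" and R0 :: "'a \<Rightarrow> 'a"
  assumes projs: "\<And>j. j \<in> {1..m} \<Longrightarrow> orth_proj (P j)"
    and R0pos: "positive_op R0"
begin

lemma R_rev_pos: "set v \<subseteq> {1..m} \<Longrightarrow> positive_op (R_rev P R0 v)"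
proof (induction v)
  case Nil then show ?case by (simp add: R0pos)
next
  case (Cons j v)
  then have pv: "positive_op (R_rev P R0 v)" and j: "j \<in> {1..m}" by auto
  show ?case unfolding R_rev.simps
    by (rule sandwich_pos[OF op_sqrt_props(1)[OF pv] proj_pos[OF proj_compl[OF projs[OF j]]]])
qed

lemma R_word_pos: "set w \<subseteq> {1..m} \<Longrightarrow> positive_op (R_word P R0 w)"
  unfolding R_word_def by (rule R_rev_pos) simp

lemma R_word_snoc: "R_word P R0 (w @ [j]) = op_sqrt (R_word P R0 w) \<circ> (\<lambda>y. y - P j y) \<circ> op_sqrt (R_word P R0 w)"
  by (simp add: R_word_def)

lemma D_word_snoc: "D_word P R0 (w @ [j]) = op_sqrt (R_word P R0 w) \<circ> P j \<circ> op_sqrt (R_word P R0 w)"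
  by (simp add: D_word_def)

lemma D_word_pos: "set w \<subseteq> {1..m} \<Longrightarrow> j \<in> {1..m} \<Longrightarrow> positive_op (D_word P R0 (w @ [j]))"
  unfolding D_word_snoc
  by (rule sandwich_pos[OF op_sqrt_props(1)[OF R_word_pos] proj_pos[OF projs]])

lemma R_split:
  assumes "set w \<subseteq> {1..m}" "j \<in> {1..m}"
  shows "R_word P R0 w y = R_word P R0 (w @ [j]) y + D_word P R0 (w @ [j]) y"
proof -
  define S where "S = op_sqrt (R_word P R0 w)"
  have pS: "positive_op S" unfolding S_def by (rule op_sqrt_props(1)[OF R_word_pos[OF assms(1)]])
  have SS: "S (S y) = R_word P R0 w y" unfolding S_def by (rule op_sqrt_props(2)[OF R_word_pos[OF assms(1)]])
  have "R_word P R0 (w @ [j]) y + D_word P R0 (w @ [j]) y = S (S y - P j (S y)) + S (P j (S y))"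
    unfolding R_word_snoc D_word_snoc S_def by simp
  also have "\<dots> = S (S y)" by (simp add: bop_add[OF pos_bop[OF pS], symmetric])
  finally show ?thesis using SS by simp
qed

end


lemma prefix_Suc: "prefix \<omega> (Suc n) = prefix \<omega> n @ [\<omega> n]"
  by (simp add: prefix_def)

lemma prefix_0: "prefix \<omega> 0 = []"
  by (simp add: prefix_def)

lemma meas_prefix: "(\<lambda>\<omega>. prefix \<omega> n) \<in> measurable (path_space m) (count_space UNIV)"
proof (induction n)
  case 0 show ?case by (simp add: prefix_def)
next
  case (Suc n)
  have "(\<lambda>\<omega>. \<omega> n) \<in> measurable (path_space m) (count_space {1..m})"
    unfolding path_space_def by (rule measurable_component_singleton) simp
  moreover have "(\<lambda>i::nat. i) \<in> measurable (count_space {1..m}) (count_space UNIV)" by simp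
  ultimately have c: "(\<lambda>\<omega>. \<omega> n) \<in> measurable (path_space m) (count_space UNIV)"
    using measurable_compose by blast
  have pm0: "(\<lambda>\<omega>. (prefix \<omega> n, \<omega> n)) \<in> measurable (path_space m) (count_space UNIV \<Otimes>\<^sub>M count_space UNIV)"
    by (rule measurable_Pair[OF Suc.IH c])
  have "count_space UNIV \<Otimes>\<^sub>M count_space UNIV = count_space (UNIV :: (nat list \<times> nat) set)"
    using pair_measure_countable[of "UNIV::nat list set" "UNIV::nat set"] by simp
  then have pm: "(\<lambda>\<omega>. (prefix \<omega> n, \<omega> n)) \<in> measurable (path_space m) (count_space UNIV)"
    using pm0 by simp
  have "(\<lambda>(w, j). w @ [j]) \<in> measurable (count_space (UNIV::(nat list \<times> nat) set)) (count_space UNIV)"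
    by simp
  from measurable_compose[OF pm this] show ?case by (simp add: prefix_Suc)
qed

lemma meas_prefix_fun: "(\<lambda>\<omega>. F (prefix \<omega> n) :: complex) \<in> borel_measurable (path_space m)"
  by (rule measurable_compose[OF meas_prefix borel_measurable_count_space])

theorem proposition4p4:
  fixes m :: nat
    and P :: "nat \<Rightarrow> 'a::chilbert_space \<Rightarrow> 'a"
    and R0 :: "'a \<Rightarrow> 'a"
    and q :: "nat \<Rightarrow> real"
    and x :: 'a
    and \<nu> :: "(nat \<Rightarrow> nat) measure"
  assumes "m \<ge> 2"
    and "\<And>j. j \<in> {1..m} \<Longrightarrow> orth_proj (P j)"
    and "positive_op R0"
    and "\<And>j. j \<in> {1..m} \<Longrightarrow> q j \<ge> 0"
    and "(\<Sum>j\<in>{1..m}. q j) = 1"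
    and "is_path_measure m P R0 q x \<nu>"
    and "0 < cinner x (R0 x)"
  shows "(\<forall>k\<ge>1. (\<forall>\<omega>\<in>space \<nu>. 0 \<le> cinner x (Delta P R0 k \<omega> x))
            \<and> integrable \<nu> (\<lambda>\<omega>. cinner x (Delta P R0 k \<omega> x)))
       \<and> integrable \<nu> (\<lambda>\<omega>. cinner x (R_inf P R0 \<omega> x))
       \<and> summable (\<lambda>k. integral\<^sup>L \<nu> (\<lambda>\<omega>. cinner x (Delta P R0 (Suc k) \<omega> x)))
       \<and> cinner x (R0 x) = integral\<^sup>L \<nu> (\<lambda>\<omega>. cinner x (R_inf P R0 \<omega> x))
            + (\<Sum>k. integral\<^sup>L \<nu> (\<lambda>\<omega>. cinner x (Delta P R0 (Suc k) \<omega> x)))"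
proof -
  interpret tree m P R0 using assms(2,3) by unfold_locales
  have pm: "is_path_measure m P R0 q x \<nu>" by fact
  then have ps: "prob_space \<nu>" and sets_eq: "sets \<nu> = sets (path_space m)"
    by (simp_all add: is_path_measure_def)
  interpret prob_space \<nu> by (rule ps)
  have sp: "space \<nu> = space (path_space m)" by (rule sets_eq_imp_space_eq[OF sets_eq])
  have inspace: "\<omega> i \<in> {1..m}" if "\<omega> \<in> space \<nu>" for \<omega> i
    using that unfolding sp path_space_def space_PiM by (auto simp: PiE_iff)
  have setpre: "set (prefix \<omega> n) \<subseteq> {1..m}" if "\<omega> \<in> space \<nu>" for \<omega> n
    using inspace[OF that] by (auto simp: prefix_def)
  have measF: "(\<lambda>\<omega>. F (prefix \<omega> n) :: complex) \<in> borel_measurable \<nu>" for F n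
    using meas_prefix_fun measurable_cong_sets[OF sets_eq refl] by blast
  define c0 where "c0 = cinner x (R0 x)"
  define rr where "rr = (\<lambda>n \<omega>. cinner x (R_word P R0 (prefix \<omega> n) x))"
  define dd where "dd = (\<lambda>k \<omega>. cinner x (Delta P R0 (Suc k) \<omega> x))"
  define Ri where "Ri = (\<lambda>\<omega>. cinner x (R_inf P R0 \<omega> x))"
  have dd_alt: "dd k \<omega> = cinner x (D_word P R0 (prefix \<omega> k @ [\<omega> k]) x)" for k \<omega>
    unfolding dd_def Delta_def prefix_Suc ..
  have rr_meas: "rr n \<in> borel_measurable \<nu>" for n
    unfolding rr_def by (rule measF)
  have dd_meas: "dd k \<in> borel_measurable \<nu>" for k
    unfolding dd_def Delta_def by (rule measF)
  have split: "rr n \<omega> = rr (Suc n) \<omega> + dd n \<omega>" if "\<omega> \<in> space \<nu>" for n \<omega>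
    unfolding rr_def dd_alt prefix_Suc
    using R_split[OF setpre[OF that, of n] inspace[OF that, of n], of x] by (simp add: cinner_add_right)
  have dd_nonneg: "0 \<le> dd n \<omega>" if "\<omega> \<in> space \<nu>" for n \<omega>
    unfolding dd_alt by (rule pos_ge[OF D_word_pos[OF setpre[OF that, of n] inspace[OF that, of n]]])
  have rr_nonneg: "0 \<le> rr n \<omega>" if "\<omega> \<in> space \<nu>" for n \<omega>
    unfolding rr_def by (rule pos_ge[OF R_word_pos[OF setpre[OF that, of n]]])
  have rr0: "rr 0 \<omega> = c0" for \<omega> unfolding rr_def c0_def prefix_0 by (simp add: R_word_def)
  have rr_sum: "rr n \<omega> = c0 - (\<Sum>k<n. dd k \<omega>)" if "\<omega> \<in> space \<nu>" for n \<omega>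
  proof (induction n)
    case 0 then show ?case by (simp add: rr0)
  next
    case (Suc n) then show ?case using split[OF that, of n] by (simp add: algebra_simps)
  qed
  have rr_Re_le: "Re (rr n \<omega>) \<le> Re c0" if "\<omega> \<in> space \<nu>" for n \<omega>
  proof -
    have "0 \<le> Re (dd k \<omega>)" for k using dd_nonneg[OF that, of k] by (simp add: less_eq_complex_def)
    then have "0 \<le> (\<Sum>k<n. Re (dd k \<omega>))" by (simp add: sum_nonneg)
    then show ?thesis using rr_sum[OF that, of n] by (simp add: Re_sum)
  qed
  have rr_norm: "norm (rr n \<omega>) \<le> Re c0" if "\<omega> \<in> space \<nu>" for n \<omega>
  proof -
    have "Im (rr n \<omega>) = 0" "0 \<le> Re (rr n \<omega>)" using rr_nonneg[OF that, of n] by (simp_all add: less_eq_complex_def)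
    then show ?thesis using rr_Re_le[OF that, of n] by (simp add: cmod_eq_Re)
  qed
  have dd_norm: "norm (dd n \<omega>) \<le> Re c0" if "\<omega> \<in> space \<nu>" for n \<omega>
  proof -
    have "Im (dd n \<omega>) = 0" "0 \<le> Re (dd n \<omega>)" using dd_nonneg[OF that, of n] by (simp_all add: less_eq_complex_def)
    moreover have "Re (dd n \<omega>) \<le> Re (rr n \<omega>)"
      using split[OF that, of n] rr_nonneg[OF that, of "Suc n"] by (simp add: less_eq_complex_def)
    ultimately show ?thesis using rr_Re_le[OF that, of n] by (simp add: cmod_eq_Re)
  qed
  have rr_lim: "(\<lambda>n. rr n \<omega>) \<longlonglongrightarrow> Ri \<omega>" if "\<omega> \<in> space \<nu>" for \<omega>
  proof -
    let ?Rn = "\<lambda>n. R_word P R0 (prefix \<omega> n)"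
    have "convergent (\<lambda>n. ?Rn n x)"
    proof (rule decr_conv)
      show "positive_op (?Rn n)" for n by (rule R_word_pos[OF setpre[OF that, of n]])
      show "Re (cinner y (?Rn (Suc n) y)) \<le> Re (cinner y (?Rn n y))" for n y
      proof -
        have "?Rn n y = ?Rn (Suc n) y + D_word P R0 (prefix \<omega> n @ [\<omega> n]) y"
          unfolding prefix_Suc by (rule R_split[OF setpre[OF that, of n] inspace[OF that, of n]])
        then have "cinner y (?Rn n y) = cinner y (?Rn (Suc n) y) + cinner y (D_word P R0 (prefix \<omega> n @ [\<omega> n]) y)"
          by (simp add: cinner_add_right)
        moreover have "0 \<le> Re (cinner y (D_word P R0 (prefix \<omega> n @ [\<omega> n]) y))"
          by (rule pos_Re[OF D_word_pos[OF setpre[OF that, of n] inspace[OF that, of n]]])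
        ultimately show ?thesis by simp
      qed
    qed
    then have "(\<lambda>n. ?Rn n x) \<longlonglongrightarrow> R_inf P R0 \<omega> x"
      unfolding R_inf_def by (simp add: convergent_LIMSEQ_iff)
    from bounded_linear.tendsto[OF bounded_linear_cinner_right this, of x]
    show ?thesis unfolding rr_def Ri_def .
  qed
  have Ri_meas: "Ri \<in> borel_measurable \<nu>"
    by (rule borel_measurable_LIMSEQ_metric[OF rr_meas rr_lim])
  have dd_int: "integrable \<nu> (dd k)" for k
    by (rule integrable_const_bound[where B="Re c0"]) (auto simp: dd_norm dd_meas)
  have rr_int: "integrable \<nu> (rr k)" for k
    by (rule integrable_const_bound[where B="Re c0"]) (auto simp: rr_norm rr_meas)
  have Ri_int: "integrable \<nu> Ri"
    by (rule integrable_dominated_convergence[where s=rr and w="\<lambda>_. Re c0"])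
       (auto simp: Ri_meas rr_meas rr_lim rr_norm)
  have int_lim: "(\<lambda>n. integral\<^sup>L \<nu> (rr n)) \<longlonglongrightarrow> integral\<^sup>L \<nu> Ri"
    by (rule integral_dominated_convergence[where s=rr and w="\<lambda>_. Re c0"])
       (auto simp: Ri_meas rr_meas rr_lim rr_norm)
  have int_rr: "integral\<^sup>L \<nu> (rr n) = c0 - (\<Sum>k<n. integral\<^sup>L \<nu> (dd k))" for n
  proof -
    have "integral\<^sup>L \<nu> (rr n) = integral\<^sup>L \<nu> (\<lambda>\<omega>. c0 - (\<Sum>k<n. dd k \<omega>))"
      by (rule Bochner_Integration.integral_cong) (simp_all add: rr_sum)
    also have "\<dots> = c0 - (\<Sum>k<n. integral\<^sup>L \<nu> (dd k))"
      using dd_int by (simp add: integral_sum prob_space)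
    finally show ?thesis .
  qed
  have sums: "(\<lambda>k. integral\<^sup>L \<nu> (dd k)) sums (c0 - integral\<^sup>L \<nu> Ri)"
  proof -
    have "(\<lambda>n. c0 - integral\<^sup>L \<nu> (rr n)) \<longlonglongrightarrow> c0 - integral\<^sup>L \<nu> Ri"
      by (intro tendsto_intros int_lim)
    then show ?thesis unfolding sums_def by (simp add: int_rr)
  qed
  have part1: "\<forall>k\<ge>1. (\<forall>\<omega>\<in>space \<nu>. 0 \<le> cinner x (Delta P R0 k \<omega> x))
            \<and> integrable \<nu> (\<lambda>\<omega>. cinner x (Delta P R0 k \<omega> x))"
  proof (intro allI impI)
    fix k :: nat assume "1 \<le> k"
    then obtain k' where k: "k = Suc k'" by (cases k) auto
    show "(\<forall>\<omega>\<in>space \<nu>. 0 \<le> cinner x (Delta P R0 k \<omega> x)) \<and> integrable \<nu> (\<lambda>\<omega>. cinner x (Delta P R0 k \<omega> x))"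
      using dd_nonneg dd_int[of k'] unfolding dd_def k by auto
  qed
  show ?thesis
  proof (intro conjI)
    show "\<forall>k\<ge>1. (\<forall>\<omega>\<in>space \<nu>. 0 \<le> cinner x (Delta P R0 k \<omega> x))
            \<and> integrable \<nu> (\<lambda>\<omega>. cinner x (Delta P R0 k \<omega> x))" by (rule part1)
    show "integrable \<nu> (\<lambda>\<omega>. cinner x (R_inf P R0 \<omega> x))" using Ri_int unfolding Ri_def .
    show "summable (\<lambda>k. integral\<^sup>L \<nu> (\<lambda>\<omega>. cinner x (Delta P R0 (Suc k) \<omega> x)))"
      using sums unfolding dd_def by (rule sums_summable)
    show "cinner x (R0 x) = integral\<^sup>L \<nu> (\<lambda>\<omega>. cinner x (R_inf P R0 \<omega> x))
            + (\<Sum>k. integral\<^sup>L \<nu> (\<lambda>\<omega>. cinner x (Delta P R0 (Suc k) \<omega> x)))"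
      using sums_unique[OF sums] unfolding dd_def Ri_def c0_def by (metis add.commute diff_eq_eq)
  qed
qed

end
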